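(* The edge set of the complete 4-partite graph $K_{4,4,4,4}$ can be partitioned into 2 subgraphs, each isomorphic to the Shrikhande graph.
   Context: The Shrikhande graph is the Cayley graph on the group $\mathbb{Z}_4 \times \mathbb{Z}_4$ with connection set $\{\pm(1,0), \pm(0,1), \pm(1,1)\}$. It is a 6-regular graph on 16 vertices with 48 edges. $K_{4,4,4,4}$ is the complete multipartite graph with four parts, each of size 4. *)

theory Defs
  imports Main
begin

text \<open>Simple graphs are represented by a vertex set V and an edge set E,
  where each edge is a 2-element subset of V.\<close>

definition graph_iso :: "'a set \<Rightarrow> 'a set set \<Rightarrow> 'b set \<Rightarrow> 'b set set \<Rightarrow> bool" where
  "graph_iso V E W F \<longleftrightarrow>
     (\<exists>f. bij_betw f V W \<and> (\<forall>u\<in>V. \<forall>v\<in>V. {u, v} \<in> E \<longleftrightarrow> {f u, f v} \<in> F))"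

definition Z4Z4 :: "(int \<times> int) set" where
  "Z4Z4 = {0..<4} \<times> {0..<4}"

definition shrikhande_edges :: "(int \<times> int) set set" where
  "shrikhande_edges = {{u, v} | u v. u \<in> Z4Z4 \<and> v \<in> Z4Z4 \<and>
      ((fst u - fst v) mod 4, (snd u - snd v) mod 4) \<in> {(1,0), (3,0), (0,1), (0,3), (1,1), (3,3)}}"

text \<open>Complete 4-partite graph K_{4,4,4,4}: vertices (part, index) with
  part, index in {0..3}; two vertices adjacent iff in different parts.\<close>
definition K4444_verts :: "(nat \<times> nat) set" where
  "K4444_verts = {0..<4} \<times> {0..<4}"

definition K4444_edges :: "(nat \<times> nat) set set" where
  "K4444_edges = {{u, v} | u v. u \<in> K4444_verts \<and> v \<in> K4444_verts \<and> fst u \<noteq> fst v}"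

end

theory Submission
  imports Defs
begin

definition Sp :: "int \<Rightarrow> int \<Rightarrow> bool" where
  "Sp p q = ((p, q) \<in> {(1,0), (3,0), (0,1), (0,3), (1,1), (3,3)})"

definition ff :: "int \<times> int \<Rightarrow> nat \<times> nat" where
  "ff u = (nat (2 * (fst u mod 2) + snd u mod 2), nat (2 * (fst u div 2) + snd u div 2))"

definition hh :: "nat \<times> nat \<Rightarrow> int \<times> int" where
  "hh x = (int (2 * (snd x div 2) + fst x div 2), int (2 * (snd x mod 2) + fst x mod 2))"

definition phi :: "int \<times> int \<Rightarrow> int \<times> int" where
  "phi u = ((fst u + snd u) mod 4, (3 * fst u + 2 * snd u) mod 4)"

lemma I4: "{0..<4::int} = {0,1,2,3}"
proof -
  have "x \<in> {0..<4::int} \<longleftrightarrow> x \<in> {0,1,2,3}" for x by auto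
  then show ?thesis by blast
qed

lemma N4: "{0..<4::nat} = {0,1,2,3}"
  by (auto simp: atLeast0LessThan lessThan_Suc numeral_eq_Suc)

lemma Zset: "Z4Z4 = {0,1,2,3} \<times> {0,1,2,3}"
  unfolding Z4Z4_def I4 ..

lemma Kset: "K4444_verts = {0,1,2,3} \<times> {0,1,2,3}"
  unfolding K4444_verts_def N4 ..

lemma hh_ff: "u \<in> Z4Z4 \<Longrightarrow> hh (ff u) = u"
  by (auto simp: Zset hh_def ff_def)

lemma ff_hh_all: "\<forall>x\<in>{0,1,2,3} \<times> {0,1,2,3}. ff (hh x) = x \<and> hh x \<in> {0,1,2,3} \<times> {0,1,2,3}"
  by (simp add: hh_def ff_def)

lemma ff_hh: "x \<in> K4444_verts \<Longrightarrow> ff (hh x) = x \<and> hh x \<in> Z4Z4"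
  using ff_hh_all unfolding Kset[symmetric] Zset[symmetric] by blast

lemma range4: "(x::int) mod 4 \<in> {0,1,2,3}"
proof -
  have "0 \<le> x mod 4" "x mod 4 < 4" by auto
  then show ?thesis by auto
qed

lemma par_key: "((x::int) mod 2 = y mod 2) \<longleftrightarrow> ((x - y) mod 4) mod 2 = 0"
proof -
  have "((x - y) mod 4) mod 2 = (x - y) mod 2" by (simp add: mod_mod_cancel)
  moreover have "(x mod 2 = y mod 2) \<longleftrightarrow> (x - y) mod 2 = 0"
    by presburger
  ultimately show ?thesis by simp
qed

lemma Sp_cases: "\<forall>p\<in>{0,1,2,3}. \<forall>q\<in>{0,1,2,3}. Sp p q \<longrightarrow> Sp ((-p) mod 4) ((-q) mod 4) \<and> \<not> (p mod 2 = 0 \<and> q mod 2 = 0)"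
  by (simp add: Sp_def)

lemma phi_cases: "\<forall>p\<in>{0,1,2,3}. \<forall>q\<in>{0,1,2,3}.
   Sp p q \<longleftrightarrow> (\<not> ((p+q) mod 4 mod 2 = 0 \<and> (3*p+2*q) mod 4 mod 2 = 0) \<and> \<not> Sp ((p+q) mod 4) ((3*p+2*q) mod 4))"
  by (simp add: Sp_def)

lemma phi_inj_cases: "\<forall>p\<in>{0,1,2,3}. \<forall>q\<in>{0,1,2,3}.
   (p+q) mod 4 = 0 \<longrightarrow> (3*p+2*q) mod 4 = 0 \<longrightarrow> p = 0 \<and> q = (0::int)"
  by simp


definition adjS :: "int \<times> int \<Rightarrow> int \<times> int \<Rightarrow> bool" where
  "adjS u v = Sp ((fst u - fst v) mod 4) ((snd u - snd v) mod 4)"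

definition gg :: "int \<times> int \<Rightarrow> nat \<times> nat" where
  "gg u = ff (phi u)"

definition R1 :: "nat \<times> nat \<Rightarrow> nat \<times> nat \<Rightarrow> bool" where
  "R1 x y = adjS (hh x) (hh y)"

definition R2 :: "nat \<times> nat \<Rightarrow> nat \<times> nat \<Rightarrow> bool" where
  "R2 x y = (fst x \<noteq> fst y \<and> \<not> R1 x y)"

lemma adjS_sym: "adjS u v \<Longrightarrow> adjS v u"
proof -
  assume a: "adjS u v"
  define p where "p = (fst u - fst v) mod 4"
  define q where "q = (snd u - snd v) mod 4"
  have p: "p \<in> {0,1,2,3}" and q: "q \<in> {0,1,2,3}" unfolding p_def q_def by (rule range4)+
  have e1: "(fst v - fst u) mod 4 = (- p) mod 4" unfolding p_def by (simp add: mod_minus_eq)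
  have e2: "(snd v - snd u) mod 4 = (- q) mod 4" unfolding q_def by (simp add: mod_minus_eq)
  have "Sp p q" using a unfolding adjS_def p_def q_def .
  then have "Sp ((-p) mod 4) ((-q) mod 4) \<and> \<not> (p mod 2 = 0 \<and> q mod 2 = 0)" by (rule Sp_cases[rule_format, OF p q])
  then have "Sp ((-p) mod 4) ((-q) mod 4)" by (rule conjunct1)
  then show "adjS v u" unfolding adjS_def e1 e2 .
qed

lemma adjS_par: "adjS u v \<Longrightarrow> \<not> (fst u mod 2 = fst v mod 2 \<and> snd u mod 2 = snd v mod 2)"
proof -
  assume a: "adjS u v"
  define p where "p = (fst u - fst v) mod 4"
  define q where "q = (snd u - snd v) mod 4"
  have p: "p \<in> {0,1,2,3}" and q: "q \<in> {0,1,2,3}" unfolding p_def q_def by (rule range4)+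
  have "Sp p q" using a unfolding adjS_def p_def q_def .
  then have "Sp ((-p) mod 4) ((-q) mod 4) \<and> \<not> (p mod 2 = 0 \<and> q mod 2 = 0)" by (rule Sp_cases[rule_format, OF p q])
  then have "\<not> (p mod 2 = 0 \<and> q mod 2 = 0)" by (rule conjunct2)
  then show ?thesis unfolding par_key p_def q_def .
qed

lemma bits_eq: "0 \<le> (a::int) \<Longrightarrow> a \<le> 1 \<Longrightarrow> 0 \<le> b \<Longrightarrow> b \<le> 1 \<Longrightarrow> 0 \<le> c \<Longrightarrow> c \<le> 1 \<Longrightarrow> 0 \<le> d \<Longrightarrow> d \<le> 1 \<Longrightarrow>
  (2 * a + b = 2 * c + d) \<longleftrightarrow> (a = c \<and> b = d)"
  by presburger

lemma fst_ff: "fst (ff u) = fst (ff v) \<longleftrightarrow> (fst u mod 2 = fst v mod 2 \<and> snd u mod 2 = snd v mod 2)"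
proof -
  have r: "0 \<le> x mod 2" "x mod (2::int) \<le> 1" for x by auto
  have "fst (ff u) = fst (ff v) \<longleftrightarrow> 2 * (fst u mod 2) + snd u mod 2 = 2 * (fst v mod 2) + snd v mod 2"
    unfolding ff_def fst_conv
    by (rule eq_nat_nat_iff) (simp_all add: r add_nonneg_nonneg)
  also have "\<dots> \<longleftrightarrow> (fst u mod 2 = fst v mod 2 \<and> snd u mod 2 = snd v mod 2)"
    by (rule bits_eq) (rule r)+
  finally show ?thesis .
qed

lemma phi_d1: "(fst (phi u) - fst (phi v)) mod 4 = ((fst u - fst v) mod 4 + (snd u - snd v) mod 4) mod 4"
proof -
  have "(fst (phi u) - fst (phi v)) mod 4 = ((fst u + snd u) - (fst v + snd v)) mod 4"
    unfolding phi_def fst_conv by (rule mod_diff_eq)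
  also have "\<dots> = ((fst u - fst v) + (snd u - snd v)) mod 4" by (simp add: algebra_simps)
  also have "\<dots> = ((fst u - fst v) mod 4 + (snd u - snd v) mod 4) mod 4" by (rule mod_add_eq[symmetric])
  finally show ?thesis .
qed

lemma phi_d2: "(snd (phi u) - snd (phi v)) mod 4 = (3 * ((fst u - fst v) mod 4) + 2 * ((snd u - snd v) mod 4)) mod 4"
proof -
  have "(snd (phi u) - snd (phi v)) mod 4 = ((3 * fst u + 2 * snd u) - (3 * fst v + 2 * snd v)) mod 4"
    unfolding phi_def snd_conv by (rule mod_diff_eq)
  also have "\<dots> = (3 * (fst u - fst v) + 2 * (snd u - snd v)) mod 4" by (simp add: algebra_simps)
  also have "\<dots> = (3 * ((fst u - fst v) mod 4) + 2 * ((snd u - snd v) mod 4)) mod 4"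
    by (simp only: mod_add_eq[symmetric, of "3 * _"] mod_mult_right_eq[of 3] mod_mult_right_eq[of 2])
  finally show ?thesis .
qed

lemma phi_Z: "phi u \<in> Z4Z4"
  by (simp add: phi_def Z4Z4_def)

lemma ff_Z_all: "\<forall>u\<in>{0,1,2,3} \<times> {0,1,2,3}. ff u \<in> {0,1,2,3} \<times> {0,1,2,3}"
  by (simp add: ff_def)

lemma ff_Z: "u \<in> Z4Z4 \<Longrightarrow> ff u \<in> K4444_verts"
  using ff_Z_all unfolding Kset[symmetric] Zset[symmetric] by blast

lemma Z_eq: "u \<in> Z4Z4 \<Longrightarrow> v \<in> Z4Z4 \<Longrightarrow> (fst u - fst v) mod 4 = 0 \<Longrightarrow> (snd u - snd v) mod 4 = 0 \<Longrightarrow> u = v"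
  unfolding Z4Z4_def by (cases u, cases v) (simp, presburger)

lemma phi_inj: "inj_on phi Z4Z4"
proof (rule inj_onI)
  fix u v assume uv: "u \<in> Z4Z4" "v \<in> Z4Z4" "phi u = phi v"
  define p where "p = (fst u - fst v) mod 4"
  define q where "q = (snd u - snd v) mod 4"
  have p: "p \<in> {0,1,2,3}" and q: "q \<in> {0,1,2,3}" unfolding p_def q_def by (rule range4)+
  have "(p + q) mod 4 = (fst (phi u) - fst (phi v)) mod 4" unfolding p_def q_def by (rule phi_d1[symmetric])
  also have "\<dots> = 0" using uv(3) by simp
  finally have "(p + q) mod 4 = 0" .
  moreover have "(3 * p + 2 * q) mod 4 = (snd (phi u) - snd (phi v)) mod 4" unfolding p_def q_def by (rule phi_d2[symmetric])
  moreover have "(snd (phi u) - snd (phi v)) mod 4 = 0" using uv(3) by simp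
  ultimately have "(p + q) mod 4 = 0" "(3 * p + 2 * q) mod 4 = 0" by simp_all
  then have "p = 0 \<and> q = 0" by (rule phi_inj_cases[rule_format, OF p q])
  then show "u = v" unfolding p_def q_def using Z_eq[OF uv(1) uv(2)] by auto
qed

lemma phi_img: "phi ` Z4Z4 = Z4Z4"
proof (rule endo_inj_surj)
  show "finite Z4Z4" by (simp add: Z4Z4_def)
  show "phi ` Z4Z4 \<subseteq> Z4Z4" using phi_Z by blast
qed (rule phi_inj)

lemma ff_inj: "inj_on ff Z4Z4"
  by (metis hh_ff inj_onI)

lemma ff_img: "ff ` Z4Z4 = K4444_verts"
proof
  show "ff ` Z4Z4 \<subseteq> K4444_verts" using ff_Z by blast
  show "K4444_verts \<subseteq> ff ` Z4Z4" using ff_hh by (metis image_eqI subsetI)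
qed

lemma gg_inj: "inj_on gg Z4Z4"
proof -
  have "gg = ff \<circ> phi" unfolding gg_def by (rule ext) simp
  moreover have "inj_on (ff \<circ> phi) Z4Z4"
    by (rule comp_inj_on) (simp_all add: phi_inj phi_img ff_inj)
  ultimately show ?thesis by simp
qed

lemma gg_img: "gg ` Z4Z4 = K4444_verts"
  unfolding gg_def using phi_img ff_img by (metis image_image)

lemma ff_iso: "\<forall>u\<in>Z4Z4. \<forall>v\<in>Z4Z4. adjS u v \<longleftrightarrow> R1 (ff u) (ff v)"
  by (simp add: R1_def hh_ff)

lemma gg_iso: "\<forall>u\<in>Z4Z4. \<forall>v\<in>Z4Z4. adjS u v \<longleftrightarrow> R2 (gg u) (gg v)"
proof (intro ballI)
  fix u v assume uv: "u \<in> Z4Z4" "v \<in> Z4Z4"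
  define p where "p = (fst u - fst v) mod 4"
  define q where "q = (snd u - snd v) mod 4"
  have p: "p \<in> {0,1,2,3}" and q: "q \<in> {0,1,2,3}" unfolding p_def q_def by (rule range4)+
  have h: "hh (gg u) = phi u" "hh (gg v) = phi v" unfolding gg_def by (rule hh_ff[OF phi_Z])+
  have "R2 (gg u) (gg v) \<longleftrightarrow> fst (ff (phi u)) \<noteq> fst (ff (phi v)) \<and> \<not> adjS (phi u) (phi v)"
    unfolding R2_def R1_def h unfolding gg_def ..
  also have "\<dots> \<longleftrightarrow> \<not> ((p+q) mod 4 mod 2 = 0 \<and> (3*p+2*q) mod 4 mod 2 = 0) \<and> \<not> Sp ((p+q) mod 4) ((3*p+2*q) mod 4)"
    unfolding fst_ff par_key adjS_def phi_d1 phi_d2 p_def q_def ..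
  also have "\<dots> \<longleftrightarrow> Sp p q" by (rule phi_cases[rule_format, OF p q, symmetric])
  also have "\<dots> \<longleftrightarrow> adjS u v" unfolding adjS_def p_def q_def ..
  finally show "adjS u v \<longleftrightarrow> R2 (gg u) (gg v)" by simp
qed


lemma dbl_mem:
  assumes sym: "\<And>x y. x \<in> A \<Longrightarrow> y \<in> A \<Longrightarrow> R x y \<Longrightarrow> R y x"
    and "u \<in> A" "v \<in> A"
  shows "{u, v} \<in> {{x, y} | x y. x \<in> A \<and> y \<in> A \<and> R x y} \<longleftrightarrow> R u v"
proof
  assume "{u, v} \<in> {{x, y} | x y. x \<in> A \<and> y \<in> A \<and> R x y}"
  then obtain x y where "{u,v} = {x,y}" "x \<in> A" "y \<in> A" "R x y" by blast
  then show "R u v" using sym by (metis doubleton_eq_iff)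
next
  assume "R u v" then show "{u, v} \<in> {{x, y} | x y. x \<in> A \<and> y \<in> A \<and> R x y}"
    using assms by blast
qed

definition E1 :: "(nat \<times> nat) set set" where
  "E1 = {{x, y} | x y. x \<in> K4444_verts \<and> y \<in> K4444_verts \<and> R1 x y}"

definition E2 :: "(nat \<times> nat) set set" where
  "E2 = {{x, y} | x y. x \<in> K4444_verts \<and> y \<in> K4444_verts \<and> R2 x y}"

lemma S_eq: "shrikhande_edges = {{u, v} | u v. u \<in> Z4Z4 \<and> v \<in> Z4Z4 \<and> adjS u v}"
  unfolding shrikhande_edges_def adjS_def Sp_def ..

lemma S_mem: "u \<in> Z4Z4 \<Longrightarrow> v \<in> Z4Z4 \<Longrightarrow> {u,v} \<in> shrikhande_edges \<longleftrightarrow> adjS u v"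
  unfolding S_eq by (rule dbl_mem) (rule adjS_sym)

lemma R1_sym: "R1 x y \<Longrightarrow> R1 y x"
  unfolding R1_def by (rule adjS_sym)

lemma R1_fst: "x \<in> K4444_verts \<Longrightarrow> y \<in> K4444_verts \<Longrightarrow> R1 x y \<Longrightarrow> fst x \<noteq> fst y"
proof
  assume xy: "x \<in> K4444_verts" "y \<in> K4444_verts" "R1 x y" "fst x = fst y"
  have "fst (ff (hh x)) = fst (ff (hh y))" using ff_hh[OF xy(1)] ff_hh[OF xy(2)] xy(4) by simp
  then have "fst (hh x) mod 2 = fst (hh y) mod 2 \<and> snd (hh x) mod 2 = snd (hh y) mod 2"
    unfolding fst_ff .
  moreover have "adjS (hh x) (hh y)" using xy(3) unfolding R1_def .
  ultimately show False using adjS_par by blast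
qed

lemma R2_sym: "R2 x y \<Longrightarrow> R2 y x"
  using R1_sym unfolding R2_def by metis

lemma E1_mem: "x \<in> K4444_verts \<Longrightarrow> y \<in> K4444_verts \<Longrightarrow> {x,y} \<in> E1 \<longleftrightarrow> R1 x y"
  unfolding E1_def by (rule dbl_mem) (rule R1_sym)

lemma E2_mem: "x \<in> K4444_verts \<Longrightarrow> y \<in> K4444_verts \<Longrightarrow> {x,y} \<in> E2 \<longleftrightarrow> R2 x y"
  unfolding E2_def by (rule dbl_mem) (rule R2_sym)

lemma K_mem: "x \<in> K4444_verts \<Longrightarrow> y \<in> K4444_verts \<Longrightarrow> {x,y} \<in> K4444_edges \<longleftrightarrow> fst x \<noteq> fst y"
  unfolding K4444_edges_def by (rule dbl_mem) auto

lemma U1: "E1 \<union> E2 \<subseteq> K4444_edges"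
proof
  fix e assume "e \<in> E1 \<union> E2"
  then obtain x y where e: "e = {x,y}" "x \<in> K4444_verts" "y \<in> K4444_verts" "R1 x y \<or> R2 x y"
    unfolding E1_def E2_def by blast
  then have "fst x \<noteq> fst y" using R1_fst R2_def by blast
  then show "e \<in> K4444_edges" using e K_mem by blast
qed
lemma U2: "K4444_edges \<subseteq> E1 \<union> E2"
proof
  fix e assume "e \<in> K4444_edges"
  then obtain x y where e: "e = {x,y}" "x \<in> K4444_verts" "y \<in> K4444_verts" "fst x \<noteq> fst y"
    unfolding K4444_edges_def by blast
  then have "R1 x y \<or> R2 x y" using R2_def by blast
  then show "e \<in> E1 \<union> E2" using e E1_mem E2_mem by blast
qed
lemma I: "E1 \<inter> E2 = {}"
  proof (rule ccontr)
    assume "E1 \<inter> E2 \<noteq> {}"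
    then obtain x y where xy: "x \<in> K4444_verts" "y \<in> K4444_verts" "R2 x y" "{x,y} \<in> E1"
      unfolding E2_def by blast
    then have "R1 x y" using E1_mem by blast
    then show False using xy R2_def by blast
  qed
lemma G1: "graph_iso Z4Z4 shrikhande_edges K4444_verts E1"
  unfolding graph_iso_def
proof (intro exI[of _ ff] conjI ballI)
  show "bij_betw ff Z4Z4 K4444_verts" using ff_img ff_inj by (simp add: bij_betw_def)
  fix u v assume uv: "u \<in> Z4Z4" "v \<in> Z4Z4"
  then have "ff u \<in> K4444_verts" "ff v \<in> K4444_verts" using ff_img by auto
  then show "{u, v} \<in> shrikhande_edges \<longleftrightarrow> {ff u, ff v} \<in> E1"
    using uv S_mem E1_mem ff_iso by simp
qed
lemma G2: "graph_iso Z4Z4 shrikhande_edges K4444_verts E2"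
  unfolding graph_iso_def
proof (intro exI[of _ gg] conjI ballI)
  show "bij_betw gg Z4Z4 K4444_verts" using gg_img gg_inj by (simp add: bij_betw_def)
  fix u v assume uv: "u \<in> Z4Z4" "v \<in> Z4Z4"
  then have "gg u \<in> K4444_verts" "gg v \<in> K4444_verts" using gg_img by auto
  then show "{u, v} \<in> shrikhande_edges \<longleftrightarrow> {gg u, gg v} \<in> E2"
    using uv S_mem E2_mem gg_iso by simp
qed
theorem lemma2p2:
  shows "\<exists>E1 E2. E1 \<union> E2 = K4444_edges \<and> E1 \<inter> E2 = {} \<and>
           graph_iso Z4Z4 shrikhande_edges K4444_verts E1 \<and>
           graph_iso Z4Z4 shrikhande_edges K4444_verts E2"
  apply (rule exI[of _ E1], rule exI[of _ E2])
  using U1 U2 I G1 G2 by (simp add: subset_antisym)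

end
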